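(* For $\sigma\in\bigwedge^3V_{10}^\vee$, there exists a flag $V_1\subset V_6\subset V_{10}$ with $\sigma(V_1,V_6,V_{10})=0$ if and only if there exists a flag $V_1\subset V_8\subset V_{10}$ with $\sigma(V_1,V_8,V_8)=0$.
   Context: $V_{10}$ is a $10$-dimensional complex vector space; $V_i$ denotes an $i$-dimensional subspace; $\sigma(A,B,C)=0$ means $\sigma(a,b,c)=0$ for all $a\in A,b\in B,c\in C$. *)

theory Defs
  imports "HOL-Analysis.Analysis"
begin

text \<open>V10 is modelled as complex^10 with complex scalar multiplication (*s);
  complex subspaces and complex dimension are vec.subspace and vec.dim.\<close>

type_synonym V10 = "complex ^ 10"

definition trilinear :: "(V10 \<Rightarrow> V10 \<Rightarrow> V10 \<Rightarrow> complex) \<Rightarrow> bool" where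
  "trilinear \<sigma> \<longleftrightarrow>
     (\<forall>b c. Vector_Spaces.linear (*s) (*) (\<lambda>a. \<sigma> a b c)) \<and>
     (\<forall>a c. Vector_Spaces.linear (*s) (*) (\<lambda>b. \<sigma> a b c)) \<and>
     (\<forall>a b. Vector_Spaces.linear (*s) (*) (\<lambda>c. \<sigma> a b c))"

text \<open>Element of the third exterior power of the dual: alternating trilinear form.\<close>
definition alt3 :: "(V10 \<Rightarrow> V10 \<Rightarrow> V10 \<Rightarrow> complex) \<Rightarrow> bool" where
  "alt3 \<sigma> \<longleftrightarrow> trilinear \<sigma> \<and>
     (\<forall>a b. \<sigma> a a b = 0) \<and> (\<forall>a b. \<sigma> a b a = 0) \<and> (\<forall>a b. \<sigma> b a a = 0)"

definition vanishes_on :: "(V10 \<Rightarrow> V10 \<Rightarrow> V10 \<Rightarrow> complex) \<Rightarrow> V10 set \<Rightarrow> V10 set \<Rightarrow> V10 set \<Rightarrow> bool" where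
  "vanishes_on \<sigma> A B C \<longleftrightarrow> (\<forall>a\<in>A. \<forall>b\<in>B. \<forall>c\<in>C. \<sigma> a b c = 0)"

definition csubspace_dim :: "V10 set \<Rightarrow> nat \<Rightarrow> bool" where
  "csubspace_dim V n \<longleftrightarrow> vec.subspace V \<and> vec.dim V = n"

end

theory Submission imports Defs begin
lemma linD:
  assumes "Vector_Spaces.linear (*s) (*) (f :: V10 \<Rightarrow> complex)"
  shows "f (x + y) = f x + f y" "f (c *s x) = c * f x"
  using assms unfolding Vector_Spaces.linear_iff by auto
lemma lin_kernel:
  assumes "Vector_Spaces.linear (*s) (*) (f :: V10 \<Rightarrow> complex)"
  shows "vec.subspace {x. f x = 0}"
proof -
  have "f 0 = 0" using linD(2)[OF assms, where c=0 and x=0] by simp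
  then show ?thesis unfolding vec.subspace_def using linD[OF assms] by simp
qed
lemma dim10: "vec.dim (UNIV :: V10 set) = 10" by (simp add: vec.dim_UNIV card_cart_basis)
lemma dim_le10: "vec.dim (S::V10 set) \<le> 10" using vec.dim_subset[of S UNIV] dim10 by simp
lemma full: "vec.dim (S::V10 set) = 10 \<Longrightarrow> vec.span S = UNIV"
  using vec.dim_eq_span[of S UNIV] dim10 by simp

lemma grow:
  fixes A S :: "V10 set"
  assumes "vec.subspace A" "vec.subspace S" "A \<subseteq> S" "vec.dim A < vec.dim S"
  shows "\<exists>x\<in>S. x \<notin> A \<and> vec.subspace (vec.span (insert x A)) \<and> vec.span (insert x A) \<subseteq> S
     \<and> A \<subseteq> vec.span (insert x A) \<and> vec.dim (vec.span (insert x A)) = vec.dim A + 1"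
proof -
  have "\<not> S \<subseteq> A" using assms vec.dim_subset by (metis leD)
  then obtain x where x: "x \<in> S" "x \<notin> A" by blast
  have "x \<notin> vec.span A" using x assms(1) vec.span_eq_iff by blast
  then have "vec.dim (vec.span (insert x A)) = vec.dim A + 1" using vec.dim_insert[of x A] by simp
  moreover have "vec.span (insert x A) \<subseteq> S" using x assms by (intro vec.span_minimal) auto
  moreover have "A \<subseteq> vec.span (insert x A)" by (meson subset_insertI vec.span_superset subset_trans)
  ultimately show ?thesis using x vec.subspace_span by blast
qed

lemma extend:
  fixes A S :: "V10 set"
  assumes "vec.subspace A" "vec.subspace S" "A \<subseteq> S" "vec.dim A \<le> n" "n \<le> vec.dim S"
  shows "\<exists>T. vec.subspace T \<and> A \<subseteq> T \<and> T \<subseteq> S \<and> vec.dim T = n"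
  using assms
proof (induction "n - vec.dim A" arbitrary: A)
  case 0
  then have "vec.dim A = n" by simp
  then show ?case using "0.prems" by (intro exI[of _ A]) simp
next
  case (Suc k)
  then have "vec.dim A < vec.dim S" by linarith
  then obtain x where x: "x \<in> S" "x \<notin> A" "vec.subspace (vec.span (insert x A))" "vec.span (insert x A) \<subseteq> S"
     "A \<subseteq> vec.span (insert x A)" "vec.dim (vec.span (insert x A)) = vec.dim A + 1"
    using grow[of A S] Suc.prems by blast
  have "k = n - vec.dim (vec.span (insert x A))" using x(6) Suc.hyps(2) by simp
  moreover have "vec.dim (vec.span (insert x A)) \<le> n" using x(6) Suc.hyps(2) by simp
  ultimately obtain T where "vec.subspace T" "vec.span (insert x A) \<subseteq> T" "T \<subseteq> S" "vec.dim T = n"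
    using Suc.hyps(1)[OF _ x(3) Suc.prems(2) x(4) _ Suc.prems(5)] by auto
  then show ?case using x(5) by (intro exI[of _ T]) auto
qed

lemma hyper:
  assumes lin: "Vector_Spaces.linear (*s) (*) (f :: V10 \<Rightarrow> complex)"
  shows "9 \<le> vec.dim {x. f x = 0}"
proof (cases "\<forall>x. f x = 0")
  case True then show ?thesis using dim10 by simp
next
  case False
  then obtain u where u: "f u \<noteq> 0" by blast
  define u' where "u' = (1 / f u) *s u"
  have fu': "f u' = 1" using u linD(2)[OF lin] u'_def by simp
  have "UNIV \<subseteq> vec.span (insert u' {x. f x = 0})"
  proof
    fix x :: V10
    have "f (x - f x *s u') + f (f x *s u') = f x" using linD(1)[OF lin, where x="x - f x *s u'" and y="f x *s u'"] by simp
    then have "f (x - f x *s u') = 0" using linD(2)[OF lin, where c="f x" and x=u'] fu' by simp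
    then show "x \<in> vec.span (insert u' {x. f x = 0})"
      unfolding vec.span_breakdown_eq by (intro exI[of _ "f x"] vec.span_base) simp
  qed
  then have "vec.dim (UNIV::V10 set) \<le> vec.dim (vec.span (insert u' {x. f x = 0}))" by (rule vec.dim_subset)
  then have "10 \<le> vec.dim (insert u' {x. f x = 0})" using dim10 by simp
  then show ?thesis using vec.dim_insert[of u' "{x. f x = 0}"] by (simp split: if_splits)
qed

lemma inter:
  fixes S T :: "V10 set"
  assumes "vec.subspace S" "vec.subspace T"
  shows "vec.dim S + vec.dim T \<le> vec.dim (S \<inter> T) + 10"
  using vec.dim_sums_Int[OF assms] dim_le10[of "{x + y |x y. x \<in> S \<and> y \<in> T}"] by linarith

lemma bil_span:
  fixes \<beta> :: "V10 \<Rightarrow> V10 \<Rightarrow> complex"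
  assumes l1: "\<And>y. Vector_Spaces.linear (*s) (*) (\<lambda>x. \<beta> x y)"
    and l2: "\<And>x. Vector_Spaces.linear (*s) (*) (\<lambda>y. \<beta> x y)"
    and G: "\<forall>p\<in>G. \<forall>q\<in>G. \<beta> p q = 0"
    and p: "p \<in> vec.span G" and q: "q \<in> vec.span G"
  shows "\<beta> p q = 0"
proof -
  have A: "\<forall>p\<in>G. \<forall>q\<in>vec.span G. \<beta> p q = 0"
  proof (intro ballI)
    fix p q assume "p \<in> G" "q \<in> vec.span G"
    moreover have "vec.span G \<subseteq> {q. \<beta> p q = 0}"
      using G \<open>p \<in> G\<close> by (intro vec.span_minimal lin_kernel[OF l2]) auto
    ultimately show "\<beta> p q = 0" by blast
  qed
  have "vec.span G \<subseteq> {p. \<beta> p q = 0}"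
    using A q by (intro vec.span_minimal lin_kernel[OF l1]) auto
  then show ?thesis using p by blast
qed

lemma dim1:
  assumes "csubspace_dim V 1"
  shows "\<exists>v. V = vec.span {v}"
proof -
  obtain B where B: "B \<subseteq> V" "vec.independent B" "V \<subseteq> vec.span B" "card B = vec.dim V"
    using vec.basis_exists by blast
  then obtain v where "B = {v}" using assms unfolding csubspace_dim_def by (metis card_1_singletonE)
  moreover have "vec.span B \<subseteq> V" using B(1) assms unfolding csubspace_dim_def by (intro vec.span_minimal) auto
  ultimately have "V = vec.span {v}" using B(3) by auto
  then show ?thesis by blast
qed

theorem lemma4p1:
  fixes \<sigma> :: "V10 \<Rightarrow> V10 \<Rightarrow> V10 \<Rightarrow> complex"
  assumes "alt3 \<sigma>"
  shows "(\<exists>V1 V6. csubspace_dim V1 1 \<and> csubspace_dim V6 6 \<and> V1 \<subseteq> V6 \<and>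
            vanishes_on \<sigma> V1 V6 UNIV)
     \<longleftrightarrow> (\<exists>V1 V8. csubspace_dim V1 1 \<and> csubspace_dim V8 8 \<and> V1 \<subseteq> V8 \<and>
            vanishes_on \<sigma> V1 V8 V8)"
proof -
  have L1: "\<And>b c. Vector_Spaces.linear (*s) (*) (\<lambda>a. \<sigma> a b c)"
    and L2: "\<And>a c. Vector_Spaces.linear (*s) (*) (\<lambda>b. \<sigma> a b c)"
    and L3: "\<And>a b. Vector_Spaces.linear (*s) (*) (\<lambda>c. \<sigma> a b c)"
    and Z1: "\<And>a b. \<sigma> a a b = 0" and Z3: "\<And>a b. \<sigma> b a a = 0"
    using assms unfolding alt3_def trilinear_def by auto
  have sc: "\<And>c v x y. \<sigma> (c *s v) x y = c * \<sigma> v x y"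
    using linD(2)[OF L1] by blast
  have anti: "\<And>v x y. \<sigma> v x y = - \<sigma> v y x"
  proof -
    fix v x y
    have "0 = \<sigma> v (x+y) (x+y)" using Z3 by simp
    also have "\<dots> = \<sigma> v x (x+y) + \<sigma> v y (x+y)" using linD(1)[OF L2] by blast
    also have "\<dots> = \<sigma> v x x + \<sigma> v x y + (\<sigma> v y x + \<sigma> v y y)" using linD(1)[OF L3] by simp
    finally show "\<sigma> v x y = - \<sigma> v y x" using Z3 by (simp add: eq_neg_iff_add_eq_0)
  qed
  have inV1: "\<And>a v. a \<in> vec.span {v} \<Longrightarrow> \<exists>c. a = c *s v"
    using vec.span_singleton by auto
  show ?thesis
  proof
    assume "\<exists>V1 V6. csubspace_dim V1 1 \<and> csubspace_dim V6 6 \<and> V1 \<subseteq> V6 \<and>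
            vanishes_on \<sigma> V1 V6 UNIV"
    then obtain V1 V6 where h: "csubspace_dim V1 1" "csubspace_dim V6 6" "V1 \<subseteq> V6"
      "vanishes_on \<sigma> V1 V6 UNIV" by blast
    obtain v where v: "V1 = vec.span {v}" using dim1[OF h(1)] by blast
    have vV1: "v \<in> V1" using v vec.span_superset by blast
    have vanV6: "\<And>x y. x \<in> V6 \<Longrightarrow> \<sigma> v x y = 0"
      using h(4) vV1 unfolding vanishes_on_def by blast
    have s6: "vec.subspace V6" "vec.dim V6 = 6" using h(2) unfolding csubspace_dim_def by auto
    obtain x1 where x1: "x1 \<notin> V6" "vec.dim (vec.span (insert x1 V6)) = 7"
      "V6 \<subseteq> vec.span (insert x1 V6)"
      using grow[of V6 UNIV] s6 dim10 by auto
    define L where "L = vec.span (insert x1 V6)"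
    define H where "H = {y. \<sigma> v y x1 = 0}"
    have sH: "vec.subspace H" unfolding H_def by (rule lin_kernel[OF L2])
    have dH: "9 \<le> vec.dim H" unfolding H_def by (rule hyper[OF L2])
    have LH: "L \<subseteq> H" unfolding L_def
      by (rule vec.span_minimal[OF _ sH]) (auto simp: H_def Z3 vanV6)
    obtain x2 where x2: "x2 \<in> H" "vec.dim (vec.span (insert x2 L)) = 8"
      "L \<subseteq> vec.span (insert x2 L)"
      using grow[of L H] sH LH dH x1(2) unfolding L_def by auto
    define V8 where "V8 = vec.span (insert x2 L)"
    define G where "G = insert x2 (insert x1 V6)"
    have V8G: "V8 \<subseteq> vec.span G"
    proof -
      have "L \<subseteq> vec.span G" unfolding L_def G_def by (rule vec.span_mono) auto
      moreover have "x2 \<in> vec.span G" unfolding G_def by (rule vec.span_base) simp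
      ultimately show ?thesis unfolding V8_def by (intro vec.span_minimal) auto
    qed
    have x2H: "\<sigma> v x2 x1 = 0" using x2(1) H_def by simp
    have GG: "\<forall>p\<in>G. \<forall>q\<in>G. \<sigma> v p q = 0"
    proof (intro ballI)
      fix p q assume p: "p \<in> G" and q: "q \<in> G"
      have sym0: "\<And>a b. \<sigma> v b a = 0 \<Longrightarrow> \<sigma> v a b = 0"
      proof -
        fix a b assume "\<sigma> v b a = 0" then show "\<sigma> v a b = 0" using anti[of v a b] by simp
      qed
      have qq: "\<And>q. q \<in> V6 \<Longrightarrow> \<sigma> v p q = 0" using sym0 vanV6 by blast
      have x12: "\<sigma> v x1 x2 = 0" using sym0 x2H by blast
      have "p = x2 \<or> p = x1 \<or> p \<in> V6" "q = x2 \<or> q = x1 \<or> q \<in> V6" using p q G_def by auto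
      then show "\<sigma> v p q = 0"
        using Z3 x2H x12 vanV6 qq by auto
    qed
    have isoV8: "\<And>p q. p \<in> V8 \<Longrightarrow> q \<in> V8 \<Longrightarrow> \<sigma> v p q = 0"
      using bil_span[of "\<lambda>x y. \<sigma> v x y" G] L2 L3 GG V8G by blast
    show "\<exists>V1 V8. csubspace_dim V1 1 \<and> csubspace_dim V8 8 \<and> V1 \<subseteq> V8 \<and>
            vanishes_on \<sigma> V1 V8 V8"
    proof (intro exI conjI)
      show "csubspace_dim V1 1" by (rule h(1))
      show "csubspace_dim V8 8" unfolding csubspace_dim_def V8_def using x2(2) by simp
      show "V1 \<subseteq> V8" using h(3) x1(3) x2(3) unfolding V8_def L_def by blast
      show "vanishes_on \<sigma> V1 V8 V8" unfolding vanishes_on_def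
      proof (intro ballI)
        fix a p q assume "a \<in> V1" "p \<in> V8" "q \<in> V8"
        then obtain c where "a = c *s v" using inV1 v by blast
        then show "\<sigma> a p q = 0" using sc isoV8 \<open>p \<in> V8\<close> \<open>q \<in> V8\<close> by simp
      qed
    qed
  next
    assume "\<exists>V1 V8. csubspace_dim V1 1 \<and> csubspace_dim V8 8 \<and> V1 \<subseteq> V8 \<and>
            vanishes_on \<sigma> V1 V8 V8"
    then obtain V1 V8 where h: "csubspace_dim V1 1" "csubspace_dim V8 8" "V1 \<subseteq> V8"
      "vanishes_on \<sigma> V1 V8 V8" by blast
    obtain v where v: "V1 = vec.span {v}" using dim1[OF h(1)] by blast
    have vV1: "v \<in> V1" using v vec.span_superset by blast
    have vanV8: "\<And>x y. x \<in> V8 \<Longrightarrow> y \<in> V8 \<Longrightarrow> \<sigma> v x y = 0"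
      using h(4) vV1 unfolding vanishes_on_def by blast
    have s8: "vec.subspace V8" "vec.dim V8 = 8" using h(2) unfolding csubspace_dim_def by auto
    obtain w1 where w1: "vec.dim (vec.span (insert w1 V8)) = 9"
      using grow[of V8 UNIV] s8 dim10 by auto
    define A9 where "A9 = vec.span (insert w1 V8)"
    obtain w2 where w2: "vec.dim (vec.span (insert w2 A9)) = 10"
      using grow[of A9 UNIV] w1 dim10 unfolding A9_def by auto
    have U: "vec.span (insert w2 A9) = UNIV" using full w2 by simp
    define H1 where "H1 = {x. \<sigma> v x w1 = 0}"
    define H2 where "H2 = {x. \<sigma> v x w2 = 0}"
    have sH1: "vec.subspace H1" unfolding H1_def by (rule lin_kernel[OF L2])
    have dH1: "9 \<le> vec.dim H1" unfolding H1_def by (rule hyper[OF L2])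
    have sH2: "vec.subspace H2" unfolding H2_def by (rule lin_kernel[OF L2])
    have dH2: "9 \<le> vec.dim H2" unfolding H2_def by (rule hyper[OF L2])
    define S where "S = (V8 \<inter> H1) \<inter> H2"
    have sS: "vec.subspace S" unfolding S_def using s8 sH1 sH2 by (intro vec.subspace_inter)
    have "7 \<le> vec.dim (V8 \<inter> H1)" using inter[OF s8(1) sH1] s8 dH1 by linarith
    then have dS: "6 \<le> vec.dim S" using inter[OF vec.subspace_inter[OF s8(1) sH1] sH2] dH2
      unfolding S_def by linarith
    have V1S: "V1 \<subseteq> S"
    proof
      fix a assume a: "a \<in> V1"
      then obtain c where c: "a = c *s v" using inV1 v by blast
      have "\<And>w. \<sigma> v a w = 0" using c linD(2)[OF L2] Z1 by simp
      then show "a \<in> S" using a h(3) unfolding S_def H1_def H2_def by auto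
    qed
    obtain T where T: "vec.subspace T" "V1 \<subseteq> T" "T \<subseteq> S" "vec.dim T = 6"
      using extend[OF _ sS V1S, of 6] h(1) dS unfolding csubspace_dim_def by auto
    have kerS: "\<And>x y. x \<in> S \<Longrightarrow> \<sigma> v x y = 0"
    proof -
      fix x y assume x: "x \<in> S"
      define P where "P = {y. \<sigma> v x y = 0}"
      have sP: "vec.subspace P" unfolding P_def by (rule lin_kernel[OF L3])
      have "A9 \<subseteq> P" unfolding A9_def
        by (rule vec.span_minimal[OF _ sP]) (use x vanV8 in \<open>auto simp: P_def S_def H1_def\<close>)
      then have "vec.span (insert w2 A9) \<subseteq> P"
        by (intro vec.span_minimal[OF _ sP]) (use x in \<open>auto simp: P_def S_def H2_def\<close>)
      then show "\<sigma> v x y = 0" using U P_def by auto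
    qed
    show "\<exists>V1 V6. csubspace_dim V1 1 \<and> csubspace_dim V6 6 \<and> V1 \<subseteq> V6 \<and>
            vanishes_on \<sigma> V1 V6 UNIV"
    proof (intro exI conjI)
      show "csubspace_dim V1 1" by (rule h(1))
      show "csubspace_dim T 6" unfolding csubspace_dim_def using T by simp
      show "V1 \<subseteq> T" by (rule T(2))
      show "vanishes_on \<sigma> V1 T UNIV" unfolding vanishes_on_def
      proof (intro ballI)
        fix a p and q :: V10 assume "a \<in> V1" "p \<in> T" "q \<in> UNIV"
        then obtain c where "a = c *s v" using inV1 v by blast
        then show "\<sigma> a p q = 0" using sc kerS T(3) \<open>p \<in> T\<close> by auto
      qed
    qed
  qed
qed
end
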